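(* Let $(\mathcal J^n)_{n\in\mathbb N}$ be a sequence of closed convex subsets of $\mathbb R^d$ with set limit $\mathcal J=\operatorname{Lim}_{n\to\infty}\mathcal J^n$, and let $Q$ be a $d\times d$ matrix such that $\ker(Q)\subseteq\mathcal J^n$ for all $n\in\mathbb N$ and $\ker(Q)\subseteq\mathcal J$. Then $Q\mathcal J=\operatorname{Lim}_{n\to\infty}Q\mathcal J^n$.
   Context: For subsets $\mathcal J^n\subseteq\mathbb R^d$: the upper limit is $\operatorname{Limsup}_n\mathcal J^n:=\{x\in\mathbb R^d:\liminf_{n\to\infty}\mathrm{dist}(x,\mathcal J^n)=0\}$ (the cluster points of sequences $x_n\in\mathcal J^n$), the lower limit is $\operatorname{Liminf}_n\mathcal J^n:=\{x:\lim_{n\to\infty}\mathrm{dist}(x,\mathcal J^n)=0\}$ (limits of sequences $x_n\in\mathcal J^n$), and $\mathcal J$ is the set limit, $\mathcal J=\operatorname{Lim}_n\mathcal J^n$, if $\mathcal J=\operatorname{Limsup}_n\mathcal J^n=\operatorname{Liminf}_n\mathcal J^n$. For a set $\mathcal S$, $Q\mathcal S:=\{Qs:s\in\mathcal S\}$. *)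

theory Defs
  imports "HOL-Analysis.Analysis"
begin

text \<open>Distance from a point to a set, with the convention dist(x, empty) = +infinity.\<close>
definition set_dist_pt :: "'a::metric_space \<Rightarrow> 'a set \<Rightarrow> ereal" where
  "set_dist_pt x S = (INF y\<in>S. ereal (dist x y))"

definition upper_limit :: "(nat \<Rightarrow> 'a::metric_space set) \<Rightarrow> 'a set" where
  "upper_limit J = {x. liminf (\<lambda>n. set_dist_pt x (J n)) = 0}"

definition lower_limit :: "(nat \<Rightarrow> 'a::metric_space set) \<Rightarrow> 'a set" where
  "lower_limit J = {x. ((\<lambda>n. set_dist_pt x (J n)) \<longlongrightarrow> 0) sequentially}"

definition set_limit :: "(nat \<Rightarrow> 'a::metric_space set) \<Rightarrow> 'a set \<Rightarrow> bool" where
  "set_limit J L \<longleftrightarrow> L = upper_limit J \<and> L = lower_limit J"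

end

theory Submission
  imports Defs
begin

lemma sdp_eq:
  fixes x :: "'a::metric_space"
  assumes "S \<noteq> {}"
  shows "set_dist_pt x S = ereal (infdist x S)"
proof -
  have "bdd_below (dist x ` S)" by (rule bdd_belowI[of _ 0]) auto
  then have "ereal (Inf (dist x ` S)) = (INF a\<in>dist x ` S. ereal a)"
    using assms by (intro ereal_Inf') auto
  then show ?thesis unfolding set_dist_pt_def infdist_notempty[OF assms]
    by (simp add: image_image)
qed

lemma liminf_iff:
  fixes f :: "nat \<Rightarrow> real"
  assumes nn: "\<And>n. 0 \<le> f n"
  shows "liminf (\<lambda>n. ereal (f n)) = 0 \<longleftrightarrow> (\<forall>e>0. \<exists>\<^sub>F n in sequentially. f n < e)"
proof
  assume h: "liminf (\<lambda>n. ereal (f n)) = 0"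
  show "\<forall>e>0. \<exists>\<^sub>F n in sequentially. f n < e"
  proof (intro allI impI)
    fix e :: real assume e: "e > 0"
    show "\<exists>\<^sub>F n in sequentially. f n < e"
    proof (rule ccontr)
      assume "\<not> (\<exists>\<^sub>F n in sequentially. f n < e)"
      then have "\<forall>\<^sub>F n in sequentially. ereal e \<le> ereal (f n)"
        by (simp add: not_frequently not_less)
      then have "ereal e \<le> liminf (\<lambda>n. ereal (f n))" by (rule Liminf_bounded)
      with h e show False by simp
    qed
  qed
next
  assume h: "\<forall>e>0. \<exists>\<^sub>F n in sequentially. f n < e"
  have ge: "0 \<le> liminf (\<lambda>n. ereal (f n))"
    by (rule Liminf_bounded) (simp add: nn)
  show "liminf (\<lambda>n. ereal (f n)) = 0"
  proof (rule ccontr)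
    assume "liminf (\<lambda>n. ereal (f n)) \<noteq> 0"
    with ge have "0 < liminf (\<lambda>n. ereal (f n))" by simp
    then obtain e :: real where e: "0 < e" "ereal e < liminf (\<lambda>n. ereal (f n))"
      by (metis ereal_dense2 ereal_less(2) less_trans)
    then have "\<forall>\<^sub>F n in sequentially. ereal e < ereal (f n)"
      using le_Liminf_iff[of "liminf (\<lambda>n. ereal (f n))" sequentially "\<lambda>n. ereal (f n)"] by blast
    then have "\<forall>\<^sub>F n in sequentially. \<not> f n < e"
      by (rule eventually_mono) auto
    moreover have "\<exists>\<^sub>F n in sequentially. f n < e" using h e by blast
    ultimately show False by (simp add: not_frequently[symmetric])
  qed
qed

lemma lim_iff:
  fixes f :: "nat \<Rightarrow> real"
  assumes nn: "\<And>n. 0 \<le> f n"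
  shows "((\<lambda>n. ereal (f n)) \<longlongrightarrow> 0) sequentially \<longleftrightarrow> (\<forall>e>0. \<forall>\<^sub>F n in sequentially. f n < e)"
proof -
  have "((\<lambda>n. ereal (f n)) \<longlongrightarrow> 0) sequentially \<longleftrightarrow> (f \<longlongrightarrow> 0) sequentially"
    by (simp add: zero_ereal_def)
  also have "\<dots> \<longleftrightarrow> (\<forall>e>0. \<forall>\<^sub>F n in sequentially. f n < e)"
    unfolding tendsto_iff dist_real_def using nn by simp
  finally show ?thesis .
qed

lemma ev_tr:
  fixes f h :: "nat \<Rightarrow> real"
  assumes "\<And>n. h n \<le> c * f n" "c > 0" "\<forall>e>0. \<forall>\<^sub>F n in sequentially. f n < e"
  shows "\<forall>e>0. \<forall>\<^sub>F n in sequentially. h n < e"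
proof (intro allI impI)
  fix e :: real assume e: "e > 0"
  then have "\<forall>\<^sub>F n in sequentially. f n < e / c" using assms by simp
  then show "\<forall>\<^sub>F n in sequentially. h n < e"
  proof (rule eventually_mono)
    fix n assume "f n < e / c"
    then have "c * f n < e" using assms(2) by (simp add: field_simps)
    then show "h n < e" using assms(1)[of n] by linarith
  qed
qed

lemma fr_tr:
  fixes f h :: "nat \<Rightarrow> real"
  assumes "\<And>n. h n \<le> c * f n" "c > 0" "\<forall>e>0. \<exists>\<^sub>F n in sequentially. f n < e"
  shows "\<forall>e>0. \<exists>\<^sub>F n in sequentially. h n < e"
proof (intro allI impI)
  fix e :: real assume e: "e > 0"
  then have "\<exists>\<^sub>F n in sequentially. f n < e / c" using assms by simp
  then show "\<exists>\<^sub>F n in sequentially. h n < e"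
  proof (rule frequently_elim1)
    fix n assume "f n < e / c"
    then have "c * f n < e" using assms(2) by (simp add: field_simps)
    then show "h n < e" using assms(1)[of n] by linarith
  qed
qed

lemma infdist_transfer:
  fixes a x :: "'a::metric_space"
  assumes S: "S \<noteq> {}" and c: "c > 0" and h: "\<forall>y\<in>S. \<exists>y'\<in>T. dist a y' \<le> c * dist x y"
  shows "infdist a T \<le> c * infdist x S"
proof -
  have "infdist a T / c \<le> infdist x S"
    unfolding infdist_notempty[OF S]
  proof (rule cINF_greatest)
    show "S \<noteq> {}" by fact
    fix y assume "y \<in> S"
    then obtain y' where "y' \<in> T" "dist a y' \<le> c * dist x y" using h by blast
    then have "infdist a T \<le> c * dist x y" using infdist_le[of y' T a] by linarith
    then show "infdist a T / c \<le> dist x y" using c by (simp add: field_simps)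
  qed
  then show ?thesis using c by (simp add: field_simps)
qed

theorem propositionC3:
  fixes J :: "nat \<Rightarrow> (real ^ 'd) set" and L :: "(real ^ 'd) set"
    and Q :: "real ^ 'd ^ 'd"
  assumes "\<And>n. closed (J n)" and "\<And>n. convex (J n)"
    and "set_limit J L"
    and "\<And>n. {x. Q *v x = 0} \<subseteq> J n"
    and "{x. Q *v x = 0} \<subseteq> L"
  shows "set_limit (\<lambda>n. (\<lambda>x. Q *v x) ` J n) ((\<lambda>x. Q *v x) ` L)"
proof -
  define A where "A = (\<lambda>x. Q *v x)"
  have lin: "linear A" unfolding A_def by (rule matrix_vector_mul_linear)
  have A0: "A 0 = 0" using lin by (rule linear_0)
  have Adiff: "A (x - y) = A x - A y" for x y using lin by (rule linear_diff)
  have Ascale: "A (r *\<^sub>R x) = r *\<^sub>R (A x)" for r x using lin by (rule linear_scale)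
  obtain g where g: "linear g" "\<forall>v\<in>A ` UNIV. A (g v) = v"
    using linear_exists_right_inverse_on[OF lin subspace_UNIV] by blast
  obtain Cg where Cg: "Cg > 0" "\<And>x. norm (g x) \<le> norm x * Cg"
    using bounded_linear.pos_bounded[of g] g(1) linear_conv_bounded_linear by blast
  obtain B where B: "B > 0" "\<And>x. norm (A x) \<le> norm x * B"
    using bounded_linear.pos_bounded[of A] lin linear_conv_bounded_linear by blast
  have K: "A k = 0 \<Longrightarrow> k \<in> J n" for k n using assms(4)[of n] unfolding A_def by blast
  have ne: "J n \<noteq> {}" for n using K[OF A0] by blast
  have rec: "y + k \<in> J n" if y: "y \<in> J n" and k: "A k = 0" for y k n
  proof -
    define s where "s m = (1 - inverse (real (Suc m))) *\<^sub>R y + k" for m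
    have "s m \<in> J n" for m
    proof -
      define t where "t = inverse (real (Suc m))"
      have t: "t > 0" "t \<le> 1" unfolding t_def by (auto simp: inverse_le_1_iff)
      have "A ((1 / t) *\<^sub>R k) = 0" using Ascale k by simp
      then have kk: "(1 / t) *\<^sub>R k \<in> J n" by (rule K)
      have "(1 - t) *\<^sub>R y + t *\<^sub>R ((1 / t) *\<^sub>R k) \<in> J n"
        by (rule convexD[OF assms(2)[of n] y kk]) (use t in auto)
      then show ?thesis using t unfolding s_def t_def[symmetric] by simp
    qed
    moreover have "s \<longlonglongrightarrow> (1 - 0) *\<^sub>R y + k"
      unfolding s_def by (intro tendsto_intros LIMSEQ_inverse_real_of_nat)
    ultimately show ?thesis using closed_sequentially[OF assms(1)[of n]] by fastforce
  qed
  have bA: "infdist (A x) (A ` J n) \<le> B * infdist x (J n)" for x n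
  proof (rule infdist_transfer[OF ne B(1)], intro ballI)
    fix y assume "y \<in> J n"
    moreover have "dist (A x) (A y) \<le> B * dist x y"
      using B(2)[of "x - y"] by (simp add: dist_norm Adiff mult.commute)
    ultimately show "\<exists>y'\<in>A ` J n. dist (A x) y' \<le> B * dist x y" by blast
  qed
  have bJ: "infdist x (J n) \<le> Cg * infdist (A x) (A ` J n)" for x n
  proof (rule infdist_transfer, use ne in simp, rule Cg(1), intro ballI)
    fix z assume "z \<in> A ` J n"
    then obtain y where y: "y \<in> J n" "z = A y" by blast
    define k where "k = (x - y) - g (A (x - y))"
    have "A (g (A (x - y))) = A (x - y)" using g(2) by blast
    then have "A k = 0" unfolding k_def Adiff by simp
    then have "y + k \<in> J n" by (rule rec[OF y(1)])
    moreover have "dist x (y + k) = norm (g (A (x - y)))"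
      unfolding k_def dist_norm by (simp add: algebra_simps)
    moreover have "norm (g (A (x - y))) \<le> Cg * dist (A x) z"
      using Cg(2)[of "A (x - y)"] y(2) by (simp add: dist_norm Adiff mult.commute)
    ultimately show "\<exists>y'\<in>J n. dist x y' \<le> Cg * dist (A x) z" by metis
  qed
  have clR: "closed (range A)"
    by (rule closed_subspace) (rule linear_subspace_image[OF lin subspace_UNIV])
  have nr: "\<exists>d>0. \<forall>n. d \<le> infdist z (A ` J n)" if "z \<notin> range A" for z
  proof -
    have "infdist z (range A) \<noteq> 0" using in_closed_iff_infdist_zero[OF clR] that by blast
    then have "infdist z (range A) > 0" using infdist_nonneg[of z "range A"] by linarith
    moreover have "infdist z (range A) \<le> infdist z (A ` J n)" for n
      by (rule infdist_mono) (use ne in auto)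
    ultimately show ?thesis by blast
  qed
  have neA: "A ` J n \<noteq> {}" for n using ne by blast
  have sdJ: "set_dist_pt x (J n) = ereal (infdist x (J n))" for x n by (rule sdp_eq[OF ne])
  have sdA: "set_dist_pt z (A ` J n) = ereal (infdist z (A ` J n))" for z n by (rule sdp_eq[OF neA])
  have L1: "L = upper_limit J" and L2: "L = lower_limit J" using assms(3) unfolding set_limit_def by auto
  have U: "A ` L = upper_limit (\<lambda>n. A ` J n)"
  proof (rule set_eqI)
    fix z
    let ?P = "\<lambda>f :: nat \<Rightarrow> real. \<forall>e>0. \<exists>\<^sub>F n in sequentially. f n < e"
    have eqA: "z \<in> upper_limit (\<lambda>n. A ` J n) \<longleftrightarrow> ?P (\<lambda>n. infdist z (A ` J n))" for z
      unfolding upper_limit_def sdA by (simp add: liminf_iff infdist_nonneg)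
    have eqJ: "x \<in> L \<longleftrightarrow> ?P (\<lambda>n. infdist x (J n))" for x
      unfolding L1 upper_limit_def sdJ by (simp add: liminf_iff infdist_nonneg)
    show "z \<in> A ` L \<longleftrightarrow> z \<in> upper_limit (\<lambda>n. A ` J n)"
    proof
      assume "z \<in> A ` L"
      then obtain x where x: "x \<in> L" "z = A x" by blast
      show "z \<in> upper_limit (\<lambda>n. A ` J n)"
        unfolding eqA x(2) by (rule fr_tr[OF bA B(1)]) (use x eqJ in blast)
    next
      assume h: "z \<in> upper_limit (\<lambda>n. A ` J n)"
      show "z \<in> A ` L"
      proof (cases "z \<in> range A")
        case True
        then obtain x where x: "z = A x" by blast
        have "?P (\<lambda>n. infdist x (J n))"
          by (rule fr_tr[OF bJ Cg(1)]) (use h eqA x in blast)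
        then show ?thesis using eqJ x by blast
      next
        case False
        then obtain d where d: "d > 0" "\<And>n. d \<le> infdist z (A ` J n)" using nr by blast
        have "\<exists>\<^sub>F n in sequentially. infdist z (A ` J n) < d" using h eqA d(1) by blast
        then have "\<exists>\<^sub>F n in sequentially. False" by (rule frequently_elim1) (use d(2) not_less in blast)
        then show ?thesis by simp
      qed
    qed
  qed
  have W: "A ` L = lower_limit (\<lambda>n. A ` J n)"
  proof (rule set_eqI)
    fix z
    let ?P = "\<lambda>f :: nat \<Rightarrow> real. \<forall>e>0. \<forall>\<^sub>F n in sequentially. f n < e"
    have eqA: "z \<in> lower_limit (\<lambda>n. A ` J n) \<longleftrightarrow> ?P (\<lambda>n. infdist z (A ` J n))" for z
      unfolding lower_limit_def sdA by (simp add: lim_iff infdist_nonneg)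
    have eqJ: "x \<in> L \<longleftrightarrow> ?P (\<lambda>n. infdist x (J n))" for x
      unfolding L2 lower_limit_def sdJ by (simp add: lim_iff infdist_nonneg)
    show "z \<in> A ` L \<longleftrightarrow> z \<in> lower_limit (\<lambda>n. A ` J n)"
    proof
      assume "z \<in> A ` L"
      then obtain x where x: "x \<in> L" "z = A x" by blast
      show "z \<in> lower_limit (\<lambda>n. A ` J n)"
        unfolding eqA x(2) by (rule ev_tr[OF bA B(1)]) (use x eqJ in blast)
    next
      assume h: "z \<in> lower_limit (\<lambda>n. A ` J n)"
      show "z \<in> A ` L"
      proof (cases "z \<in> range A")
        case True
        then obtain x where x: "z = A x" by blast
        have "?P (\<lambda>n. infdist x (J n))"
          by (rule ev_tr[OF bJ Cg(1)]) (use h eqA x in blast)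
        then show ?thesis using eqJ x by blast
      next
        case False
        then obtain d where d: "d > 0" "\<And>n. d \<le> infdist z (A ` J n)" using nr by blast
        have "\<forall>\<^sub>F n in sequentially. infdist z (A ` J n) < d" using h eqA d(1) by blast
        then have "\<forall>\<^sub>F n in sequentially. False" by (rule eventually_mono) (use d(2) not_less in blast)
        then show ?thesis by simp
      qed
    qed
  qed
  show ?thesis unfolding set_limit_def using U W unfolding A_def by simp
qed

end
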